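(* Let $n\ge1$ and $P=\Phi^+(A_n)=\{(i,j)\colon 1\le i,j\le n,\ i+j\ge n+1\}$. Fix $k\in\{n-1,n-3,\dots,-(n-3),-(n-1)\}$. Then \[2\sum_{\substack{(i,j)\in P\\ j-i=k}}\mathbb{1}_{(i,j)}-\sum_{\substack{(i,j)\in P\\ j-i=k-1}}\mathbb{1}_{(i,j)}-\sum_{\substack{(i,j)\in P\\ j-i=k+1}}\mathbb{1}_{(i,j)}\equiv 1.\]
   Context: $P$ is ordered by $(i,j)\le(i',j')$ iff $i\le i'$ and $j\le j'$. $\mathcal{J}(P)$ is the set of order ideals of $P$. For $x\in P$, $I\in\mathcal{J}(P)$: $\mathbb{1}_x(I)=1$ if $x\in I$, else $0$; $T_x^+(I)=1$ if $x$ is a minimal element of $P\setminus I$, else $0$; $T_x^-(I)=1$ if $x$ is a maximal element of $I$, else $0$; $T_x=T_x^+-T_x^-$. For $f,g\colon\mathcal{J}(P)\to\mathbb{R}$, $f\equiv g$ means $f-g=\sum_{x\in P}c_xT_x$ for some real constants $c_x$; a real number denotes the corresponding constant function. *)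

theory Defs
  imports Complex_Main
begin

definition posA :: "nat \<Rightarrow> (nat \<times> nat) set" where
  "posA n = {(i,j). 1 \<le> i \<and> i \<le> n \<and> 1 \<le> j \<and> j \<le> n \<and> i + j \<ge> n + 1}"

definition leqP :: "nat \<times> nat \<Rightarrow> nat \<times> nat \<Rightarrow> bool" where
  "leqP x y \<longleftrightarrow> fst x \<le> fst y \<and> snd x \<le> snd y"

definition order_ideals :: "(nat \<times> nat) set \<Rightarrow> (nat \<times> nat) set set" where
  "order_ideals P = {I. I \<subseteq> P \<and> (\<forall>x\<in>I. \<forall>y\<in>P. leqP y x \<longrightarrow> y \<in> I)}"

definition indic :: "nat \<times> nat \<Rightarrow> (nat \<times> nat) set \<Rightarrow> real" where
  "indic x I = (if x \<in> I then 1 else 0)"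

definition Tplus :: "(nat \<times> nat) set \<Rightarrow> nat \<times> nat \<Rightarrow> (nat \<times> nat) set \<Rightarrow> real" where
  "Tplus P x I = (if x \<in> P - I \<and> (\<forall>y\<in>P - I. leqP y x \<longrightarrow> y = x) then 1 else 0)"

definition Tminus :: "(nat \<times> nat) set \<Rightarrow> nat \<times> nat \<Rightarrow> (nat \<times> nat) set \<Rightarrow> real" where
  "Tminus P x I = (if x \<in> I \<and> (\<forall>y\<in>I. leqP x y \<longrightarrow> y = x) then 1 else 0)"

definition toggle :: "(nat \<times> nat) set \<Rightarrow> nat \<times> nat \<Rightarrow> (nat \<times> nat) set \<Rightarrow> real" where
  "toggle P x I = Tplus P x I - Tminus P x I"

definition toggle_equiv :: "(nat \<times> nat) set \<Rightarrow> ((nat \<times> nat) set \<Rightarrow> real) \<Rightarrow> ((nat \<times> nat) set \<Rightarrow> real) \<Rightarrow> bool" where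
  "toggle_equiv P f g \<longleftrightarrow>
     (\<exists>c :: nat \<times> nat \<Rightarrow> real. \<forall>I\<in>order_ideals P. f I - g I = (\<Sum>x\<in>P. c x * toggle P x I))"

end

theory Submission
  imports Defs
begin

lemma ideal_props:
  assumes "I \<in> order_ideals P"
  shows "I \<subseteq> P" "\<And>x y. x \<in> I \<Longrightarrow> y \<in> P \<Longrightarrow> leqP y x \<Longrightarrow> y \<in> I"
  using assms unfolding order_ideals_def by auto

lemma finite_posA: "finite (posA n)"
proof -
  have "posA n \<subseteq> {1..n} \<times> {1..n}" unfolding posA_def by auto
  then show ?thesis by (rule finite_subset) auto
qed

lemma Tminus_eq:
  assumes I: "I \<in> order_ideals (posA n)"
  shows "Tminus (posA n) (a,b) I = (if (a,b) \<in> I \<and> (a, Suc b) \<notin> I \<and> (Suc a, b) \<notin> I then 1 else 0)"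
proof -
  note ip = ideal_props[OF I]
  have "(\<forall>y\<in>I. leqP (a,b) y \<longrightarrow> y = (a,b)) \<longleftrightarrow> (a, Suc b) \<notin> I \<and> (Suc a, b) \<notin> I"
    if xI: "(a,b) \<in> I"
  proof
    assume "\<forall>y\<in>I. leqP (a,b) y \<longrightarrow> y = (a,b)"
    then show "(a, Suc b) \<notin> I \<and> (Suc a, b) \<notin> I" unfolding leqP_def by auto
  next
    assume h: "(a, Suc b) \<notin> I \<and> (Suc a, b) \<notin> I"
    show "\<forall>y\<in>I. leqP (a,b) y \<longrightarrow> y = (a,b)"
    proof (intro ballI impI)
      fix y assume yI: "y \<in> I" and le: "leqP (a,b) y"
      obtain y1 y2 where y: "y = (y1,y2)" by (cases y)
      have yP: "(y1,y2) \<in> posA n" using ip(1) yI y by auto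
      have xP: "(a,b) \<in> posA n" using ip(1) xI by auto
      show "y = (a,b)"
      proof (rule ccontr)
        assume "y \<noteq> (a,b)"
        then have "y1 \<ge> Suc a \<or> y2 \<ge> Suc b" using le y unfolding leqP_def by auto
        then show False
        proof
          assume "y1 \<ge> Suc a"
          then have "(Suc a, b) \<in> posA n" using yP xP le y unfolding posA_def leqP_def by auto
          moreover have "leqP (Suc a, b) y" using \<open>y1 \<ge> Suc a\<close> le y unfolding leqP_def by auto
          ultimately show False using ip(2)[OF yI] h by blast
        next
          assume "y2 \<ge> Suc b"
          then have "(a, Suc b) \<in> posA n" using yP xP le y unfolding posA_def leqP_def by auto
          moreover have "leqP (a, Suc b) y" using \<open>y2 \<ge> Suc b\<close> le y unfolding leqP_def by auto
          ultimately show False using ip(2)[OF yI] h by blast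
        qed
      qed
    qed
  qed
  then show ?thesis unfolding Tminus_def by auto
qed

lemma Tplus_Suc:
  assumes I: "I \<in> order_ideals (posA n)" and "a \<ge> 1" "b \<ge> 1" "a + b \<ge> n"
  shows "Tplus (posA n) (Suc a, Suc b) I =
    (if (Suc a, Suc b) \<notin> I \<and> (a, Suc b) \<in> I \<and> (Suc a, b) \<in> I then 1 else 0)"
proof -
  note ip = ideal_props[OF I]
  let ?x = "(Suc a, Suc b)"
  have "(?x \<in> posA n - I \<and> (\<forall>y\<in>posA n - I. leqP y ?x \<longrightarrow> y = ?x))
     \<longleftrightarrow> (?x \<notin> I \<and> (a, Suc b) \<in> I \<and> (Suc a, b) \<in> I)"
  proof
    assume h: "?x \<in> posA n - I \<and> (\<forall>y\<in>posA n - I. leqP y ?x \<longrightarrow> y = ?x)"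
    have c1: "(a, Suc b) \<in> posA n" "(Suc a, b) \<in> posA n"
      using h assms unfolding posA_def by auto
    have all: "\<forall>y\<in>posA n - I. leqP y ?x \<longrightarrow> y = ?x" using h by blast
    have l1: "leqP (a, Suc b) ?x" "leqP (Suc a, b) ?x" unfolding leqP_def by auto
    have "(a, Suc b) \<notin> posA n - I" using all l1(1) by force
    moreover have "(Suc a, b) \<notin> posA n - I" using all l1(2) by force
    ultimately show "?x \<notin> I \<and> (a, Suc b) \<in> I \<and> (Suc a, b) \<in> I"
      using h c1 by blast
  next
    assume h: "?x \<notin> I \<and> (a, Suc b) \<in> I \<and> (Suc a, b) \<in> I"
    have xP: "?x \<in> posA n" using h ip(1) unfolding posA_def by auto
    have "\<forall>y\<in>posA n - I. leqP y ?x \<longrightarrow> y = ?x"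
    proof (intro ballI impI)
      fix y assume yP: "y \<in> posA n - I" and le: "leqP y ?x"
      obtain y1 y2 where y: "y = (y1,y2)" by (cases y)
      show "y = ?x"
      proof (rule ccontr)
        assume "y \<noteq> ?x"
        then have "y1 \<le> a \<or> y2 \<le> b" using le y unfolding leqP_def by auto
        then show False
        proof
          assume "y1 \<le> a"
          then have "leqP y (a, Suc b)" using le y unfolding leqP_def by auto
          then show False using ip(2)[of "(a, Suc b)" y] h yP by auto
        next
          assume "y2 \<le> b"
          then have "leqP y (Suc a, b)" using le y unfolding leqP_def by auto
          then show False using ip(2)[of "(Suc a, b)" y] h yP by auto
        qed
      qed
    qed
    then show "?x \<in> posA n - I \<and> (\<forall>y\<in>posA n - I. leqP y ?x \<longrightarrow> y = ?x)"
      using xP h by auto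
  qed
  then show ?thesis unfolding Tplus_def by auto
qed

lemma Tplus_0:
  assumes I: "I \<in> order_ideals (posA n)" and "p \<ge> 1" "q \<ge> 1" "p + q = n + 1"
  shows "Tplus (posA n) (p, q) I = (if (p, q) \<in> I then 0 else 1)"
proof -
  have xP: "(p,q) \<in> posA n" using assms unfolding posA_def by auto
  have "\<forall>y\<in>posA n - I. leqP y (p,q) \<longrightarrow> y = (p,q)"
    using assms unfolding posA_def leqP_def by auto
  then show ?thesis using xP unfolding Tplus_def by auto
qed

lemma diag_sum:
  fixes h :: "nat \<times> nat \<Rightarrow> real"
  assumes z: "\<And>x. x \<notin> posA n \<Longrightarrow> h x = 0"
    and r: "\<And>i j. (i,j) \<in> posA n \<Longrightarrow> int j - int i = int b - int a \<Longrightarrow> a \<le> i \<and> i < a + n"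
  shows "(\<Sum>x\<in>{x\<in>posA n. int (snd x) - int (fst x) = int b - int a}. h x) = (\<Sum>t<n. h (a+t, b+t))"
proof -
  let ?g = "\<lambda>t. (a+t, b+t)"
  have inj: "inj_on ?g {..<n}" by (auto simp: inj_on_def)
  have "(\<Sum>t<n. h (a+t, b+t)) = (\<Sum>x\<in>?g ` {..<n}. h x)"
    using sum.reindex[OF inj, of h] by (simp add: comp_def)
  also have "\<dots> = (\<Sum>x\<in>{x\<in>posA n. int (snd x) - int (fst x) = int b - int a}. h x)"
  proof (rule sum.mono_neutral_right)
    show "finite (?g ` {..<n})" by simp
    show "{x\<in>posA n. int (snd x) - int (fst x) = int b - int a} \<subseteq> ?g ` {..<n}"
    proof
      fix x assume xs: "x \<in> {x\<in>posA n. int (snd x) - int (fst x) = int b - int a}"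
      obtain i j where x: "x = (i,j)" by (cases x)
      have "a \<le> i \<and> i < a + n" using r[of i j] xs x by auto
      moreover have "j = b + (i - a)" using xs x calculation by auto
      ultimately show "x \<in> ?g ` {..<n}" using x
        by (auto intro!: image_eqI[where x="i - a"])
    qed
    show "\<forall>x\<in>?g ` {..<n} - {x\<in>posA n. int (snd x) - int (fst x) = int b - int a}. h x = 0"
      using z by auto
  qed
  finally show ?thesis by simp
qed

lemma pointwise:
  assumes I: "I \<in> order_ideals (posA n)" and pq: "p \<ge> 1" "q \<ge> 1" "p + q = n + 1"
  defines "F \<equiv> (\<lambda>t. case t of 0 \<Rightarrow> 1 | Suc s \<Rightarrow> indic (p+s, Suc (q+s)) I * indic (Suc (p+s), q+s) I)"
  shows "toggle (posA n) (p+t, q+t) I = F t - F (Suc t) - 2 * indic (p+t, q+t) I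
           + indic (p+t, Suc (q+t)) I + indic (Suc (p+t), q+t) I"
proof -
  note ip = ideal_props[OF I]
  have m1: "(p+t, q+t) \<in> I" if "(p+t, Suc (q+t)) \<in> I" for t
  proof -
    have "(p+t, Suc (q+t)) \<in> posA n" using that ip(1) by auto
    then have "(p+t, q+t) \<in> posA n" using pq unfolding posA_def by auto
    then show ?thesis using ip(2)[OF that] unfolding leqP_def by auto
  qed
  have m2: "(p+t, q+t) \<in> I" if "(Suc (p+t), q+t) \<in> I" for t
  proof -
    have "(Suc (p+t), q+t) \<in> posA n" using that ip(1) by auto
    then have "(p+t, q+t) \<in> posA n" using pq unfolding posA_def by auto
    then show ?thesis using ip(2)[OF that] unfolding leqP_def by auto
  qed
  have TM: "Tminus (posA n) (p+t, q+t) I = (if (p+t, q+t) \<in> I \<and> (p+t, Suc (q+t)) \<notin> I \<and> (Suc (p+t), q+t) \<notin> I then 1 else 0)"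
    using Tminus_eq[OF I] by simp
  show ?thesis
  proof (cases t)
    case 0
    have TP: "Tplus (posA n) (p, q) I = (if (p, q) \<in> I then 0 else 1)" using Tplus_0[OF I pq] .
    show ?thesis using TP TM m1[of 0] m2[of 0] 0 unfolding toggle_def indic_def F_def
      by (auto split: if_splits)
  next
    case (Suc s)
    have TP: "Tplus (posA n) (Suc (p+s), Suc (q+s)) I =
      (if (Suc (p+s), Suc (q+s)) \<notin> I \<and> (p+s, Suc (q+s)) \<in> I \<and> (Suc (p+s), q+s) \<in> I then 1 else 0)"
      using Tplus_Suc[OF I, of "p+s" "q+s"] pq by auto
    have m3: "(p+s, Suc (q+s)) \<in> I \<and> (Suc (p+s), q+s) \<in> I" if h: "(Suc (p+s), Suc (q+s)) \<in> I"
    proof -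
      have "(Suc (p+s), Suc (q+s)) \<in> posA n" using h ip(1) by auto
      then have "(p+s, Suc (q+s)) \<in> posA n" "(Suc (p+s), q+s) \<in> posA n" using pq unfolding posA_def by auto
      then show ?thesis using ip(2)[OF h] unfolding leqP_def by auto
    qed
    show ?thesis using TP TM m1[of t] m2[of t] m3 Suc unfolding toggle_def indic_def F_def
      by (auto split: if_splits)
  qed
qed

theorem theorem3p28:
  fixes n :: nat and k :: int
  assumes "n \<ge> 1"
    and "\<bar>k\<bar> \<le> int n - 1"
    and "even (int n - 1 - k)"
  shows "toggle_equiv (posA n)
           (\<lambda>I. 2 * (\<Sum>x\<in>{x\<in>posA n. int (snd x) - int (fst x) = k}. indic x I)
                - (\<Sum>x\<in>{x\<in>posA n. int (snd x) - int (fst x) = k - 1}. indic x I)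
                - (\<Sum>x\<in>{x\<in>posA n. int (snd x) - int (fst x) = k + 1}. indic x I))
           (\<lambda>I. 1)"
proof -
  obtain m where m: "int n - 1 - k = 2 * m" using assms(3) by (metis evenE)
  define p where "p = nat (m + 1)"
  define q where "q = n + 1 - p"
  have pq: "p \<ge> 1" "q \<ge> 1" "p + q = n + 1" and kpq: "k = int q - int p"
    using assms(1,2) m unfolding p_def q_def by auto
  have e1: "k = int q - int p" "k - 1 = int q - int (p+1)" "k + 1 = int (q+1) - int p"
    using kpq by auto
  define c :: "nat \<times> nat \<Rightarrow> real" where "c = (\<lambda>x. if int (snd x) - int (fst x) = k then -1 else 0)"
  show ?thesis unfolding toggle_equiv_def
  proof (intro exI[of _ c] ballI)
    fix I assume I: "I \<in> order_ideals (posA n)"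
    note ip = ideal_props[OF I]
    have zi: "\<And>x. x \<notin> posA n \<Longrightarrow> indic x I = 0" using ip(1) unfolding indic_def by auto
    have zt: "\<And>x. x \<notin> posA n \<Longrightarrow> toggle (posA n) x I = 0"
      using ip(1) unfolding toggle_def Tplus_def Tminus_def by auto
    have r0: "\<And>i j. (i,j) \<in> posA n \<Longrightarrow> int j - int i = int q - int p \<Longrightarrow> p \<le> i \<and> i < p + n"
      using pq unfolding posA_def by auto
    have r1: "\<And>i j. (i,j) \<in> posA n \<Longrightarrow> int j - int i = int q - int (p+1) \<Longrightarrow> p+1 \<le> i \<and> i < p + 1 + n"
      using pq unfolding posA_def by auto
    have r2: "\<And>i j. (i,j) \<in> posA n \<Longrightarrow> int j - int i = int (q+1) - int p \<Longrightarrow> p \<le> i \<and> i < p + n"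
      using pq unfolding posA_def by auto
    define e where "e = (\<lambda>t. indic (p+t, q+t) I)"
    define f where "f = (\<lambda>t. indic (p+t, Suc (q+t)) I)"
    define g where "g = (\<lambda>t. indic (Suc (p+t), q+t) I)"
    define F where "F = (\<lambda>t. case t of 0 \<Rightarrow> 1 | Suc s \<Rightarrow> indic (p+s, Suc (q+s)) I * indic (Suc (p+s), q+s) I)"
    have S0: "(\<Sum>x\<in>{x\<in>posA n. int (snd x) - int (fst x) = k}. indic x I) = (\<Sum>t<n. e t)"
      unfolding e1(1) e_def by (rule diag_sum[OF zi r0])
    have S1: "(\<Sum>x\<in>{x\<in>posA n. int (snd x) - int (fst x) = k - 1}. indic x I) = (\<Sum>t<n. g t)"
      unfolding e1(2) g_def using diag_sum[where h="\<lambda>x. indic x I" and b=q and a="p+1", OF zi r1] by simp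
    have S2: "(\<Sum>x\<in>{x\<in>posA n. int (snd x) - int (fst x) = k + 1}. indic x I) = (\<Sum>t<n. f t)"
      unfolding e1(3) f_def using diag_sum[where h="\<lambda>x. indic x I" and b="q+1" and a=p, OF zi r2] by simp
    have ST: "(\<Sum>x\<in>{x\<in>posA n. int (snd x) - int (fst x) = k}. toggle (posA n) x I)
        = (\<Sum>t<n. toggle (posA n) (p+t, q+t) I)"
      unfolding e1(1) by (rule diag_sum[OF zt r0])
    have pw: "\<And>t. toggle (posA n) (p+t, q+t) I = (F t - F (Suc t)) + (- 2 * e t + f t + g t)"
      using pointwise[OF I pq] unfolding F_def e_def f_def g_def by simp
    have "(\<Sum>t<n. toggle (posA n) (p+t, q+t) I) = (\<Sum>t<n. F t - F (Suc t)) + (\<Sum>t<n. - 2 * e t + f t + g t)"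
      unfolding pw by (rule sum.distrib)
    also have "(\<Sum>t<n. F t - F (Suc t)) = F 0 - F n" by (rule sum_lessThan_telescope')
    also have "F n = 0"
    proof -
      obtain s where s: "n = Suc s" using assms(1) by (cases n) auto
      have "(p+s, Suc (q+s)) \<notin> posA n" using s pq unfolding posA_def by auto
      then show ?thesis using zi s unfolding F_def by simp
    qed
    also have "(\<Sum>t<n. - 2 * e t + f t + g t) = - 2 * (\<Sum>t<n. e t) + (\<Sum>t<n. f t) + (\<Sum>t<n. g t)"
      by (simp add: sum.distrib sum_distrib_left sum_subtractf sum_negf)
    finally have key: "(\<Sum>t<n. toggle (posA n) (p+t, q+t) I) = 1 - 2 * (\<Sum>t<n. e t) + (\<Sum>t<n. f t) + (\<Sum>t<n. g t)"
      unfolding F_def by simp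
    have "(\<Sum>x\<in>posA n. c x * toggle (posA n) x I)
        = - (\<Sum>x\<in>{x\<in>posA n. int (snd x) - int (fst x) = k}. toggle (posA n) x I)"
      unfolding sum.inter_filter[OF finite_posA] c_def sum_negf[symmetric]
      by (rule sum.cong) auto
    then show "2 * (\<Sum>x\<in>{x\<in>posA n. int (snd x) - int (fst x) = k}. indic x I)
                - (\<Sum>x\<in>{x\<in>posA n. int (snd x) - int (fst x) = k - 1}. indic x I)
                - (\<Sum>x\<in>{x\<in>posA n. int (snd x) - int (fst x) = k + 1}. indic x I) - 1
         = (\<Sum>x\<in>posA n. c x * toggle (posA n) x I)"
      using S0 S1 S2 ST key by simp
  qed
qed

end
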